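(* Let $A$ be an effect on a complex separable Hilbert space $\mathcal{H}$, $A'=I-A$, and define $\mathfrak{W}(\sigma_A):=\|A\|+\|A'\|-1$ and $\mathfrak{D}(\sigma_A):=\|AA'\|+\|I-AA'\|-1$. Then: (a) $0\le\mathfrak{W}(\sigma_A)-\mathfrak{D}(\sigma_A)\le1$; (b) $\mathfrak{W}(\sigma_A)-\mathfrak{D}(\sigma_A)=0$ if and only if $A$ is trivial; (c) $\mathfrak{W}(\sigma_A)-\mathfrak{D}(\sigma_A)=1$ if and only if $A$ is a nontrivial projection.
   Context: An effect is a selfadjoint bounded operator $A$ with $\mathbb{O}\le A\le I$; it is trivial if $A=\lambda I$ for some $\lambda\in[0,1]$; a nontrivial projection is a projection $P=P^2=P^*$ with $P\ne\mathbb{O},I$. Norms are operator norms. *)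

theory Defs
  imports "HOL-Analysis.Analysis"
begin

class complex_vector = real_vector +
  fixes scaleC :: "complex \<Rightarrow> 'a \<Rightarrow> 'a"
  assumes scaleR_scaleC: "scaleR r x = scaleC (complex_of_real r) x"
    and scaleC_add_right: "scaleC a (x + y) = scaleC a x + scaleC a y"
    and scaleC_add_left: "scaleC (a + b) x = scaleC a x + scaleC b x"
    and scaleC_scaleC: "scaleC a (scaleC b x) = scaleC (a * b) x"
    and scaleC_one: "scaleC 1 x = x"

class complex_normed_vector = complex_vector + real_normed_vector +
  assumes norm_scaleC: "norm (scaleC a x) = cmod a * norm x"

class complex_inner = complex_normed_vector +
  fixes cinner :: "'a \<Rightarrow> 'a \<Rightarrow> complex"
  assumes cinner_commute: "cinner x y = cnj (cinner y x)"
    and cinner_add_left: "cinner (x + y) z = cinner x z + cinner y z"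
    and cinner_scaleC_left: "cinner (scaleC r x) y = cnj r * cinner x y"
    and cinner_self_real_nonneg: "Im (cinner x x) = 0 \<and> 0 \<le> Re (cinner x x)"
    and cinner_eq_zero_iff: "cinner x x = 0 \<longleftrightarrow> x = 0"
    and norm_eq_sqrt_cinner: "norm x = sqrt (Re (cinner x x))"

class chilbert_space = complex_inner + complete_space

definition separable_space :: "'a::topological_space itself \<Rightarrow> bool" where
  "separable_space _ \<longleftrightarrow> (\<exists>D::'a set. countable D \<and> closure D = UNIV)"

definition bounded_clinear :: "('a::complex_normed_vector \<Rightarrow> 'b::complex_normed_vector) \<Rightarrow> bool" where
  "bounded_clinear f \<longleftrightarrow>
     (\<forall>x y. f (x + y) = f x + f y) \<and> (\<forall>c x. f (scaleC c x) = scaleC c (f x)) \<and>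
     (\<exists>K. \<forall>x. norm (f x) \<le> norm x * K)"

definition selfadjoint :: "('a::complex_inner \<Rightarrow> 'a) \<Rightarrow> bool" where
  "selfadjoint A \<longleftrightarrow> (\<forall>x y. cinner (A x) y = cinner x (A y))"

definition is_effect :: "('a::complex_inner \<Rightarrow> 'a) \<Rightarrow> bool" where
  "is_effect A \<longleftrightarrow> bounded_clinear A \<and> selfadjoint A \<and>
     (\<forall>x. 0 \<le> Re (cinner (A x) x) \<and> Re (cinner (A x) x) \<le> Re (cinner x x))"

definition trivial_effect :: "('a::complex_inner \<Rightarrow> 'a) \<Rightarrow> bool" where
  "trivial_effect A \<longleftrightarrow> (\<exists>c::real. 0 \<le> c \<and> c \<le> 1 \<and> A = (\<lambda>x. scaleC (complex_of_real c) x))"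

definition is_projection :: "('a::complex_inner \<Rightarrow> 'a) \<Rightarrow> bool" where
  "is_projection P \<longleftrightarrow> bounded_clinear P \<and> P \<circ> P = P \<and> selfadjoint P"

definition nontrivial_projection :: "('a::complex_inner \<Rightarrow> 'a) \<Rightarrow> bool" where
  "nontrivial_projection P \<longleftrightarrow> is_projection P \<and> P \<noteq> (\<lambda>x. 0) \<and> P \<noteq> id"

text \<open>Complement effect A' = I - A; norms are operator norms (onorm).\<close>
definition compl_op :: "('a::real_vector \<Rightarrow> 'a) \<Rightarrow> 'a \<Rightarrow> 'a" where
  "compl_op A = (\<lambda>x. x - A x)"

definition W_sigma :: "('a::real_normed_vector \<Rightarrow> 'a) \<Rightarrow> real" where
  "W_sigma A = onorm A + onorm (compl_op A) - 1"

definition D_sigma :: "('a::real_normed_vector \<Rightarrow> 'a) \<Rightarrow> real" where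
  "D_sigma A = onorm (A \<circ> compl_op A) + onorm (compl_op (A \<circ> compl_op A)) - 1"

end

theory Submission
  imports Defs
begin


definition rr :: "'a::complex_inner \<Rightarrow> 'a \<Rightarrow> real" where
  "rr x y = Re (cinner x y)"

lemma cinner_add_right: "cinner x (y + z) = cinner x y + cinner x z"
  by (metis cinner_add_left cinner_commute complex_cnj_add)

lemma rr_add_left: "rr (x + y) z = rr x z + rr y z"
  by (simp add: rr_def cinner_add_left)
lemma rr_add_right: "rr x (y + z) = rr x y + rr x z"
  by (simp add: rr_def cinner_add_right)
lemma rr_scaleR_left: "rr (t *\<^sub>R x) y = t * rr x y"
  by (simp add: rr_def scaleR_scaleC cinner_scaleC_left)
lemma rr_sym: "rr x y = rr y x"
  unfolding rr_def by (subst cinner_commute) simp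
lemma rr_scaleR_right: "rr x (t *\<^sub>R y) = t * rr x y"
  by (metis rr_sym rr_scaleR_left)
lemma rr_minus_left: "rr (- x) z = - rr x z"
  by (metis rr_scaleR_left scaleR_minus1_left mult_minus1)
lemma rr_minus_right: "rr x (- z) = - rr x z"
  by (metis rr_sym rr_minus_left)
lemma rr_diff_left: "rr (x - y) z = rr x z - rr y z"
  by (simp add: rr_add_left rr_minus_left diff_conv_add_uminus del: add_uminus_conv_diff)
lemma rr_diff_right: "rr x (y - z) = rr x y - rr x z"
  by (metis rr_sym rr_diff_left)
lemma rr_self: "rr x x = (norm x)^2"
  using cinner_self_real_nonneg[of x] norm_eq_sqrt_cinner[of x] by (simp add: rr_def)
lemma rr_zero_left[simp]: "rr 0 y = 0"
  by (metis add_cancel_right_right rr_add_left add_0)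
lemma rr_zero_right[simp]: "rr y 0 = 0"
  by (metis rr_sym rr_zero_left)

lemmas rr_simps = rr_add_left rr_add_right rr_scaleR_left rr_scaleR_right rr_minus_left
  rr_minus_right rr_diff_left rr_diff_right

lemma disc:
  fixes a b c :: real
  assumes "\<forall>t. 0 \<le> a + 2*t*b + t^2*c"
  shows "b^2 \<le> a*c"
proof -
  have a0: "0 \<le> a" using assms[rule_format, of 0] by simp
  have c0: "0 \<le> c"
  proof (rule ccontr)
    assume "\<not> 0 \<le> c"
    hence c: "c < 0" by simp
    define t where "t = sqrt ((a+1)/(-c))"
    have "0 \<le> (a+1)/(-c)" using a0 c by (intro divide_nonneg_pos) auto
    hence tt: "t^2 = (a+1)/(-c)" unfolding t_def by simp
    have "0 \<le> a + 2*t*b + t^2*c" "0 \<le> a + 2*(-t)*b + (-t)^2*c" using assms by blast+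
    hence "0 \<le> 2*a + 2*(t^2*c)" by simp
    also have "t^2*c = -(a+1)" using tt c by (simp add: field_simps)
    finally show False by simp
  qed
  show ?thesis
  proof (cases "c = 0")
    case True
    have "b = 0"
    proof (rule ccontr)
      assume "b \<noteq> 0"
      have "0 \<le> a + 2*(-(a+1)/(2*b))*b + (-(a+1)/(2*b))^2*c" using assms by blast
      with True \<open>b \<noteq> 0\<close> show False by (simp add: field_simps)
    qed
    thus ?thesis using True by simp
  next
    case False
    hence cp: "c > 0" using c0 by simp
    have "0 \<le> a + 2*(-b/c)*b + (-b/c)^2*c" using assms by blast
    hence "0 \<le> a - b^2/c" using cp by (simp add: field_simps power2_eq_square)
    thus ?thesis using cp by (simp add: field_simps)
  qed
qed

definition symop :: "('a::complex_inner \<Rightarrow> 'a) \<Rightarrow> bool" where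
  "symop B \<longleftrightarrow> (\<forall>x y. rr (B x) y = rr x (B y))"
definition posop :: "('a::complex_inner \<Rightarrow> 'a) \<Rightarrow> bool" where
  "posop B \<longleftrightarrow> (\<forall>x. 0 \<le> rr (B x) x)"

lemma pos_cs:
  assumes bl: "bounded_linear B" and s: "symop B" and p: "posop B"
  shows "(rr (B x) y)^2 \<le> rr (B x) x * rr (B y) y"
proof -
  interpret bounded_linear B by fact
  have "\<forall>t. 0 \<le> rr (B x) x + 2*t*rr (B x) y + t^2 * rr (B y) y"
  proof
    fix t
    have "0 \<le> rr (B (x + t *\<^sub>R y)) (x + t *\<^sub>R y)" using p posop_def by blast
    also have "\<dots> = rr (B x) x + t*rr (B x) y + t* rr (B y) x + t^2 * rr (B y) y"
      by (simp add: add scaleR rr_simps algebra_simps power2_eq_square)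
    also have "rr (B y) x = rr (B x) y" using s unfolding symop_def by (metis rr_sym)
    finally show "0 \<le> rr (B x) x + 2*t*rr (B x) y + t^2 * rr (B y) y" by simp
  qed
  thus ?thesis by (rule disc)
qed

lemma id_props: "bounded_linear (\<lambda>x::'a::complex_inner. x)" "symop (\<lambda>x::'a. x)" "posop (\<lambda>x::'a. x)"
  by (auto simp: symop_def posop_def rr_self)

lemma rr_cs: "\<bar>rr x y\<bar> \<le> norm x * norm y"
proof -
  have "(rr x y)^2 \<le> (norm x * norm y)^2"
    using pos_cs[OF id_props, of x y] by (simp add: rr_self power_mult_distrib)
  hence "\<bar>rr x y\<bar>^2 \<le> (norm x * norm y)^2" by simp
  thus ?thesis by (rule power2_le_imp_le) simp
qed

lemma key:
  assumes bl: "bounded_linear B" and s: "symop B" and p: "posop B" and C: "0 \<le> C"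
    and bd: "\<And>x. rr (B x) x \<le> C * (norm x)^2"
  shows "(norm (B x))^2 \<le> C * rr (B x) x"
proof -
  have "(rr (B x) (B x))^2 \<le> rr (B x) x * rr (B (B x)) (B x)" by (rule pos_cs[OF bl s p])
  also have "\<dots> \<le> rr (B x) x * (C * (norm (B x))^2)"
    using mult_left_mono[OF bd[of "B x"]] p unfolding posop_def by blast
  finally have "(norm (B x))^2 * (norm (B x))^2 \<le> (C * rr (B x) x) * (norm (B x))^2"
    by (simp add: rr_self power2_eq_square algebra_simps)
  show ?thesis
  proof (cases "B x = 0")
    case True thus ?thesis using C p posop_def by auto
  next
    case False
    hence "0 < (norm (B x))^2" by simp
    thus ?thesis using \<open>(norm (B x))^2 * (norm (B x))^2 \<le> _\<close> by (metis mult_le_cancel_right_pos)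
  qed
qed

lemma key_onorm:
  assumes bl: "bounded_linear B" and s: "symop B" and p: "posop B" and C: "0 \<le> C"
    and bd: "\<And>x. rr (B x) x \<le> C * (norm x)^2"
  shows "onorm B \<le> C"
proof (rule onorm_bound[OF C])
  fix x
  have "(norm (B x))^2 \<le> C * rr (B x) x" by (rule key[OF assms])
  also have "\<dots> \<le> C * (C * (norm x)^2)" using bd C by (simp add: mult_left_mono)
  also have "\<dots> = (C * norm x)^2" by (simp add: power2_eq_square)
  finally have "(norm (B x))^2 \<le> (C * norm x)^2" .
  thus "norm (B x) \<le> C * norm x" by (rule power2_le_imp_le) (use C in simp)
qed

lemma easy_bound:
  assumes "bounded_linear B"
  shows "rr (B x) x \<le> onorm B * (norm x)^2"
proof -
  have "rr (B x) x \<le> norm (B x) * norm x" using rr_cs[of "B x" x] by simp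
  also have "\<dots> \<le> onorm B * norm x * norm x" using onorm[OF assms] by (simp add: mult_right_mono)
  finally show ?thesis by (simp add: power2_eq_square)
qed

lemma zero_form:
  assumes bl: "bounded_linear B" and s: "symop B" and p: "posop B" and z: "rr (B x) x = 0"
  shows "B x = 0"
proof -
  have "(rr (B x) (B x))^2 \<le> 0" using pos_cs[OF bl s p, of x "B x"] z by simp
  thus ?thesis by (simp add: rr_self)
qed


definition ff :: "real \<Rightarrow> real" where "ff t = t - t^2"
definition clamp :: "real \<Rightarrow> real \<Rightarrow> real" where
  "clamp m M = (if M \<le> 1/2 then M else if 1/2 \<le> m then m else 1/2)"

lemma ff_diff: "ff a - ff b = (a - b) * (1 - a - b)"
  by (simp add: ff_def power2_eq_square algebra_simps)

lemma R1: assumes "0 \<le> m" "m \<le> t" "t \<le> M" "M \<le> 1" shows "ff t \<le> ff (clamp m M)"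
proof -
  consider "M \<le> 1/2" | "\<not> M \<le> 1/2" "1/2 \<le> m" | "\<not> M \<le> 1/2" "\<not> 1/2 \<le> m" by blast
  thus ?thesis
  proof cases
    case 1
    have "0 \<le> (M - t) * (1 - M - t)" using 1 assms by (intro mult_nonneg_nonneg) auto
    thus ?thesis using 1 ff_diff[of M t] by (simp add: clamp_def)
  next
    case 2
    have "0 \<le> (t - m) * (t + m - 1)" using 2 assms by (intro mult_nonneg_nonneg) auto
    thus ?thesis using 2 ff_diff[of m t] by (simp add: clamp_def algebra_simps)
  next
    case 3
    have "0 \<le> (t - 1/2)^2" by simp
    thus ?thesis using 3 by (simp add: clamp_def ff_def power2_eq_square algebra_simps)
  qed
qed

lemma R2: assumes "m \<le> t" "t \<le> M" shows "min (ff m) (ff M) \<le> (1-M-m)*t + M*m"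
proof (cases "1 - M - m \<ge> 0")
  case True
  have "(1-M-m)*m \<le> (1-M-m)*t" using True assms by (simp add: mult_left_mono)
  thus ?thesis by (simp add: ff_def power2_eq_square algebra_simps min_def)
next
  case False
  have "(1-M-m)*M \<le> (1-M-m)*t" using False assms by (simp add: mult_left_mono_neg)
  thus ?thesis by (simp add: ff_def power2_eq_square algebra_simps min_def)
qed

lemma prod_bound:
  fixes c e d :: real
  assumes "\<bar>c - e\<bar> \<le> d" "0 \<le> c" "c \<le> 1" "0 \<le> e" "e \<le> 1"
  shows "(c - e) * (1 - c - e) \<le> d"
proof -
  have h: "\<bar>1 - c - e\<bar> \<le> 1" using assms by auto
  have "\<bar>(c - e) * (1 - c - e)\<bar> \<le> d * 1"
    unfolding abs_mult by (rule mult_mono) (use assms h in auto)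
  thus ?thesis by simp
qed

lemma prod_strict:
  fixes c e m M :: real
  assumes "0 \<le> m" "m < M" "M \<le> 1" "m \<le> c" "c \<le> M" "m \<le> e" "e \<le> M"
  shows "(c - e) * (1 - c - e) < M - m"
proof (cases "\<bar>c - e\<bar> < M - m")
  case True
  have "\<bar>1 - c - e\<bar> \<le> 1" using assms by auto
  hence "\<bar>(c - e) * (1 - c - e)\<bar> \<le> \<bar>c - e\<bar> * 1"
    unfolding abs_mult by (rule mult_left_mono) simp
  thus ?thesis using True by simp
next
  case False
  hence ce: "(c = m \<and> e = M) \<or> (c = M \<and> e = m)" using assms by auto
  have "\<bar>1 - c - e\<bar> < 1" using ce assms by auto
  hence "\<bar>(c - e) * (1 - c - e)\<bar> < \<bar>c - e\<bar> * 1"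
    unfolding abs_mult using False assms by (intro mult_strict_left_mono) auto
  moreover have "\<bar>c - e\<bar> = M - m" using ce assms by auto
  ultimately show ?thesis using abs_ge_self[of "(c - e) * (1 - c - e)"] by (simp only: mult_1_right)
qed

lemma clamp_in: "m \<le> M \<Longrightarrow> m \<le> clamp m M \<and> clamp m M \<le> M"
  by (auto simp: clamp_def)

lemma R3: assumes "0 \<le> m" "m \<le> M" "M \<le> 1"
  shows "ff (clamp m M) - min (ff m) (ff M) \<le> M - m"
    and "m < M \<Longrightarrow> ff (clamp m M) - min (ff m) (ff M) < M - m"
proof -
  have c: "m \<le> clamp m M" "clamp m M \<le> M" using clamp_in assms by auto
  have "ff (clamp m M) - ff m \<le> M - m"
    using prod_bound[of "clamp m M" m "M - m"] c assms ff_diff by auto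
  moreover have "ff (clamp m M) - ff M \<le> M - m"
    using prod_bound[of "clamp m M" M "M - m"] c assms ff_diff by auto
  ultimately show "ff (clamp m M) - min (ff m) (ff M) \<le> M - m" by (auto simp: min_def)
  assume "m < M"
  have "ff (clamp m M) - ff m < M - m"
    using prod_strict[of m M "clamp m M" m] c assms ff_diff \<open>m < M\<close> by auto
  moreover have "ff (clamp m M) - ff M < M - m"
    using prod_strict[of m M "clamp m M" M] c assms ff_diff \<open>m < M\<close> by auto
  ultimately show "ff (clamp m M) - min (ff m) (ff M) < M - m" by (auto simp: min_def)
qed

lemma ff_le: "ff t \<le> 1/4"
proof -
  have "0 \<le> (t - 1/2)^2" by simp
  thus ?thesis by (simp add: ff_def power2_eq_square algebra_simps)
qed

lemma R4: assumes "0 \<le> m" "m \<le> M" "M \<le> 1"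
  shows "0 \<le> ff (clamp m M)" "min (ff m) (ff M) \<le> 1/4"
proof -
  have "0 \<le> clamp m M" "clamp m M \<le> 1" using clamp_in[of m M] assms by auto
  thus "0 \<le> ff (clamp m M)" by (simp add: ff_def power2_eq_square mult_left_le)
  show "min (ff m) (ff M) \<le> 1/4" using ff_le[of m] by simp
qed


lemma effect_facts:
  fixes A :: "'a::complex_inner \<Rightarrow> 'a"
  assumes "is_effect A"
  shows "bounded_linear A" "symop A" "posop A" "\<And>x. rr (A x) x \<le> (norm x)^2"
proof -
  have bc: "bounded_clinear A" and sa: "selfadjoint A"
    and f: "\<And>x. 0 \<le> Re (cinner (A x) x) \<and> Re (cinner (A x) x) \<le> Re (cinner x x)"
    using assms by (auto simp: is_effect_def)
  obtain K where add: "\<And>x y. A (x + y) = A x + A y" and sc: "\<And>c x. A (scaleC c x) = scaleC c (A x)"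
    and K: "\<And>x. norm (A x) \<le> norm x * K"
    using bc unfolding bounded_clinear_def by blast
  show "bounded_linear A"
    by (rule bounded_linear_intro[OF add _ K]) (simp add: scaleR_scaleC sc)
  show "symop A" using sa by (simp add: symop_def selfadjoint_def rr_def)
  show "posop A" using f by (simp add: posop_def rr_def)
  show "\<And>x. rr (A x) x \<le> (norm x)^2" using f by (metis rr_def rr_self)
qed

lemma symop_diff: "symop B \<Longrightarrow> symop C \<Longrightarrow> symop (\<lambda>x. B x - C x)"
  by (simp add: symop_def rr_simps)
lemma symop_id: "symop (\<lambda>x. x)" by (simp add: symop_def)
lemma symop_scale: "symop (\<lambda>x. c *\<^sub>R x)" by (simp add: symop_def rr_simps)
lemma symop_sq: "symop B \<Longrightarrow> symop (\<lambda>x. B (B x))" by (simp add: symop_def)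

lemma onorm_trivial:
  fixes f :: "'a::real_normed_vector \<Rightarrow> 'b::real_normed_vector"
  assumes "\<And>x::'a. x = 0" and "bounded_linear f"
  shows "onorm f = 0"
proof -
  have "f = (\<lambda>x. 0)" using assms by (metis linear_simps(3) bounded_linear.linear)
  thus ?thesis by (simp add: onorm_zero)
qed



theorem mainTheorem9:
  fixes A :: "'a::chilbert_space \<Rightarrow> 'a"
  assumes "separable_space TYPE('a)"
    and "is_effect A"
  shows "(0 \<le> W_sigma A - D_sigma A \<and> W_sigma A - D_sigma A \<le> 1)
    \<and> (W_sigma A - D_sigma A = 0 \<longleftrightarrow> trivial_effect A)
    \<and> (W_sigma A - D_sigma A = 1 \<longleftrightarrow> nontrivial_projection A)"
proof (cases "\<exists>e::'a. e \<noteq> 0")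
  case False
  hence z: "\<And>x::'a. x = 0" by blast
  have fz: "\<And>f::'a\<Rightarrow>'a. f = (\<lambda>x. 0)" using z by (metis ext)
  have on: "\<And>f::'a\<Rightarrow>'a. onorm f = 0" using fz by (metis onorm_zero)
  have WD: "W_sigma A - D_sigma A = 0" by (simp add: W_sigma_def D_sigma_def on)
  have "trivial_effect A" unfolding trivial_effect_def
    by (rule exI[of _ 0]) (simp, rule trans[OF fz[of A] fz[of "scaleC 0", symmetric]])
  moreover have "\<not> nontrivial_projection A" using fz[of A] by (simp add: nontrivial_projection_def)
  ultimately show ?thesis using WD by simp
next
  case True
  then obtain e :: 'a where e: "e \<noteq> 0" by blast
  have ne: "0 < (norm e)^2" using e by simp
  note ef = effect_facts[OF assms(2)]
  have blA: "bounded_linear A" and sA: "symop A" and pA: "posop A"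
    and qle: "\<And>x. rr (A x) x \<le> (norm x)^2" using ef by auto
  interpret A: bounded_linear A by fact
  have q0: "\<And>x. 0 \<le> rr (A x) x" using pA posop_def by blast
  define M where "M = onorm A"
  define N where "N = onorm (compl_op A)"
  define m where "m = 1 - N"
  define K where "K = A \<circ> compl_op A"
  define G where "G = onorm K"
  define H where "H = onorm (compl_op K)"
  have W: "W_sigma A = M - m" by (simp add: W_sigma_def M_def N_def m_def)
  have D: "D_sigma A = G + H - 1" by (simp add: D_sigma_def G_def H_def K_def)
  have cA: "compl_op A = (\<lambda>x. x - A x)" by (simp add: compl_op_def)
  have Kx: "K = (\<lambda>x. A x - A (A x))" by (simp add: K_def compl_op_def A.diff fun_eq_iff)
  have cK: "compl_op K = (\<lambda>x. x - (A x - A (A x)))" by (simp add: compl_op_def Kx)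
  have blcA: "bounded_linear (\<lambda>x. x - A x)" by (intro bounded_linear_sub blA bounded_linear_ident)
  have blK: "bounded_linear (\<lambda>x. A x - A (A x))"
    by (intro bounded_linear_sub blA bounded_linear_compose[OF blA blA])
  have blcK: "bounded_linear (\<lambda>x. x - (A x - A (A x)))" by (intro bounded_linear_sub blK bounded_linear_ident)
  have scA: "symop (\<lambda>x. x - A x)" by (intro symop_diff symop_id sA)
  have sK: "symop (\<lambda>x. A x - A (A x))" by (intro symop_diff symop_sq sA)
  have scK: "symop (\<lambda>x. x - (A x - A (A x)))" by (intro symop_diff symop_id sK)
  have rcA: "\<And>x. rr (x - A x) x = (norm x)^2 - rr (A x) x" by (simp add: rr_simps rr_self)
  have rK: "\<And>x. rr (A x - A (A x)) x = rr (A x) x - (norm (A x))^2"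
    using sA by (simp add: rr_simps rr_self symop_def)
  have rcK: "\<And>x. rr (x - (A x - A (A x))) x = (norm x)^2 - (rr (A x) x - (norm (A x))^2)"
    using rK by (simp add: rr_simps rr_self)
  have pcA: "posop (\<lambda>x. x - A x)" using qle rcA by (simp add: posop_def)
  have E1: "\<And>x. rr (A x) x \<le> M * (norm x)^2" unfolding M_def by (rule easy_bound[OF blA])
  have E2: "\<And>x. (norm x)^2 - rr (A x) x \<le> N * (norm x)^2"
    unfolding N_def cA using easy_bound[OF blcA] rcA by metis
  have M1: "M \<le> 1" unfolding M_def by (rule key_onorm[OF blA sA pA]) (use qle in auto)
  have N1: "N \<le> 1" unfolding N_def cA by (rule key_onorm[OF blcA scA pcA]) (use rcA q0 in auto)
  have M0: "0 \<le> M" unfolding M_def by (rule onorm_pos_le[OF blA])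
  have N0: "0 \<le> N" unfolding N_def cA by (rule onorm_pos_le[OF blcA])
  have m0: "0 \<le> m" using N1 m_def by simp
  have E2': "\<And>x. m * (norm x)^2 \<le> rr (A x) x" using E2 by (simp add: m_def algebra_simps)
  have mM: "m \<le> M"
  proof -
    have "m * (norm e)^2 \<le> M * (norm e)^2" using E1[of e] E2'[of e] by linarith
    thus ?thesis using ne by simp
  qed
  have Ksq: "\<And>x. (norm (A x))^2 \<le> rr (A x) x"
  proof -
    fix x
    have qle1: "\<And>x. rr (A x) x \<le> 1 * (norm x)^2" using qle by simp
    show "(norm (A x))^2 \<le> rr (A x) x" using key[OF blA sA pA zero_le_one qle1, of x] by simp
  qed
  have pK: "posop (\<lambda>x. A x - A (A x))" using Ksq rK by (simp add: posop_def)
  have pcK: "posop (\<lambda>x. x - (A x - A (A x)))" unfolding posop_def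
  proof
    fix x have "0 \<le> (norm (A x))^2" by simp
    thus "0 \<le> rr (x - (A x - A (A x))) x" using rcK[of x] qle[of x] by linarith
  qed
  have CS: "\<And>x. (rr (A x) x)^2 \<le> (norm (A x))^2 * (norm x)^2"
  proof -
    fix x
    have "rr (A x) x \<le> norm (A x) * norm x" using rr_cs[of "A x" x] by simp
    hence "(rr (A x) x)^2 \<le> (norm (A x) * norm x)^2" using q0[of x] by (simp add: power_mono)
    thus "(rr (A x) x)^2 \<le> (norm (A x))^2 * (norm x)^2" by (simp add: power_mult_distrib)
  qed
  have blB2: "bounded_linear (\<lambda>x. A x - m *\<^sub>R x)"
    by (intro bounded_linear_sub blA bounded_linear_scaleR_right bounded_linear_ident)
  have sB2: "symop (\<lambda>x. A x - m *\<^sub>R x)" by (intro symop_diff sA symop_scale)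
  have rB2: "\<And>x. rr (A x - m *\<^sub>R x) x = rr (A x) x - m * (norm x)^2" by (simp add: rr_simps rr_self)
  have pB2: "posop (\<lambda>x. A x - m *\<^sub>R x)" using rB2 E2' by (simp add: posop_def)
  have bB2: "\<And>x. rr (A x - m *\<^sub>R x) x \<le> (M - m) * (norm x)^2" using rB2 E1 by (simp add: algebra_simps)
  have E4: "\<And>x. (norm (A x))^2 \<le> (M + m) * rr (A x) x - M * m * (norm x)^2"
  proof -
    fix x
    have "(norm (A x - m *\<^sub>R x))^2 \<le> (M - m) * rr (A x - m *\<^sub>R x) x"
      using key[OF blB2 sB2 pB2 _ bB2] mM by simp
    moreover have "(norm (A x - m *\<^sub>R x))^2 = (norm (A x))^2 - 2*m*rr (A x) x + m^2 * (norm x)^2"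
    proof -
      have "(norm (A x - m *\<^sub>R x))^2 = rr (A x - m *\<^sub>R x) (A x - m *\<^sub>R x)" by (simp add: rr_self)
      also have "\<dots> = rr (A x) (A x) - m * rr x (A x) - m * rr (A x) x + m*m* rr x x"
        by (simp add: rr_simps algebra_simps)
      also have "\<dots> = (norm (A x))^2 - 2*m*rr (A x) x + m^2 * (norm x)^2"
        using rr_sym[of x "A x"] by (simp add: rr_self power2_eq_square algebra_simps)
      finally show ?thesis .
    qed
    ultimately show "(norm (A x))^2 \<le> (M + m) * rr (A x) x - M * m * (norm x)^2"
      using rB2 by (simp add: algebra_simps power2_eq_square)
  qed
  define FF where "FF = ff (clamp m M)"
  define Lo where "Lo = min (ff m) (ff M)"
  have FF0: "0 \<le> FF" and Lo4: "Lo \<le> 1/4" using R4[OF m0 mM M1] by (auto simp: FF_def Lo_def)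
  have FF4: "FF \<le> 1/4" using ff_le by (simp add: FF_def)
  have gup: "\<And>x. rr (A x) x - (norm (A x))^2 \<le> FF * (norm x)^2"
  proof -
    fix x
    show "rr (A x) x - (norm (A x))^2 \<le> FF * (norm x)^2"
    proof (cases "x = 0")
      case True thus ?thesis by simp
    next
      case False
      define n where "n = (norm x)^2"
      define q where "q = rr (A x) x"
      define a where "a = (norm (A x))^2"
      have n: "0 < n" using False n_def by simp
      have "m \<le> q / n" "q / n \<le> M" using E1[of x] E2'[of x] n
        by (auto simp: q_def n_def field_simps)
      hence "ff (q/n) \<le> FF" unfolding FF_def using R1 m0 M1 by blast
      hence "n * ff (q/n) \<le> n * FF" using n by simp
      moreover have "n * ff (q/n) = q - q^2/n" using n by (simp add: ff_def field_simps power2_eq_square)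
      moreover have "q^2 / n \<le> a" using CS[of x] n by (simp add: q_def a_def n_def field_simps)
      ultimately show ?thesis by (simp add: q_def a_def n_def algebra_simps)
    qed
  qed
  have glo: "\<And>x. Lo * (norm x)^2 \<le> rr (A x) x - (norm (A x))^2"
  proof -
    fix x
    show "Lo * (norm x)^2 \<le> rr (A x) x - (norm (A x))^2"
    proof (cases "x = 0")
      case True thus ?thesis by simp
    next
      case False
      define n where "n = (norm x)^2"
      define q where "q = rr (A x) x"
      define a where "a = (norm (A x))^2"
      have n: "0 < n" using False n_def by simp
      have "m \<le> q / n" "q / n \<le> M" using E1[of x] E2'[of x] n
        by (auto simp: q_def n_def field_simps)
      hence "Lo \<le> (1-M-m)*(q/n) + M*m" unfolding Lo_def by (rule R2)
      hence "n * Lo \<le> n * ((1-M-m)*(q/n) + M*m)" using n by simp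
      moreover have "n * ((1-M-m)*(q/n) + M*m) = q - ((M + m) * q - M * m * n)"
        using n by (simp add: field_simps)
      moreover have "a \<le> (M + m) * q - M * m * n" using E4[of x] by (simp add: q_def a_def n_def)
      ultimately show ?thesis by (simp add: q_def a_def n_def algebra_simps)
    qed
  qed
  have GF: "G \<le> FF" unfolding G_def Kx
    by (rule key_onorm[OF blK sK pK FF0]) (use rK gup in simp)
  have HL: "H \<le> 1 - Lo" unfolding H_def cK
  proof (rule key_onorm[OF blcK scK pcK])
    show "0 \<le> 1 - Lo" using Lo4 by simp
    fix x :: 'a
    have eq: "(1 - Lo) * (norm x)^2 = (norm x)^2 - Lo * (norm x)^2" by (simp add: algebra_simps)
    show "rr (x - (A x - A (A x))) x \<le> (1 - Lo) * (norm x)^2"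
      unfolding eq using rcK[of x] glo[of x] by linarith
  qed
  have G0: "0 \<le> G" unfolding G_def Kx by (rule onorm_pos_le[OF blK])
  have EG: "\<And>x. rr (A x) x - (norm (A x))^2 \<le> G * (norm x)^2"
    unfolding G_def Kx using easy_bound[OF blK] rK by metis
  have EH: "\<And>x. (norm x)^2 - (rr (A x) x - (norm (A x))^2) \<le> H * (norm x)^2"
    unfolding H_def cK using easy_bound[OF blcK] rcK by metis
  have GH: "1 \<le> G + H"
  proof -
    have "(norm e)^2 \<le> (G + H) * (norm e)^2" using EG[of e] EH[of e] by (simp add: algebra_simps)
    thus ?thesis using ne by simp
  qed
  have R3a: "FF - Lo \<le> M - m" and R3b: "m < M \<Longrightarrow> FF - Lo < M - m"
    using R3[OF m0 mM M1] by (auto simp: FF_def Lo_def)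
  have WD: "W_sigma A - D_sigma A = M - m - (G + H - 1)" using W D by simp
  have partA: "0 \<le> W_sigma A - D_sigma A \<and> W_sigma A - D_sigma A \<le> 1"
    using WD GF HL R3a GH m0 M1 by linarith
  have eq0: "W_sigma A - D_sigma A = 0 \<longleftrightarrow> m = M"
  proof
    assume "W_sigma A - D_sigma A = 0"
    hence "\<not> m < M" using WD GF HL R3b by linarith
    thus "m = M" using mM by simp
  next
    assume mMe: "m = M"
    hence "FF = Lo" by (simp add: FF_def Lo_def clamp_def)
    thus "W_sigma A - D_sigma A = 0" using WD GF HL GH mMe by linarith
  qed
  have triv: "trivial_effect A \<longleftrightarrow> m = M"
  proof
    assume "trivial_effect A"
    then obtain c :: real where c: "0 \<le> c" "c \<le> 1" "A = (\<lambda>x. scaleC (complex_of_real c) x)"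
      unfolding trivial_effect_def by blast
    have Ac: "\<And>x. A x = c *\<^sub>R x" using c(3) by (simp add: scaleR_scaleC)
    have "M \<le> c" unfolding M_def by (rule key_onorm[OF blA sA pA c(1)]) (simp add: Ac rr_simps rr_self)
    moreover have "N \<le> 1 - c" unfolding N_def cA
      by (rule key_onorm[OF blcA scA pcA]) (use c(1,2) in \<open>simp_all add: Ac rr_simps rr_self algebra_simps\<close>)
    ultimately show "m = M" using mM m_def by linarith
  next
    assume mMe: "m = M"
    have "\<And>x. A x - m *\<^sub>R x = 0"
    proof -
      fix x
      have "rr (A x - m *\<^sub>R x) x = 0" using bB2[of x] pB2 mMe posop_def
        by (metis (no_types, lifting) diff_self mult_zero_left order_antisym)
      thus "A x - m *\<^sub>R x = 0" by (rule zero_form[OF blB2 sB2 pB2])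
    qed
    hence "A = (\<lambda>x. scaleC (complex_of_real m) x)" by (simp add: fun_eq_iff scaleR_scaleC[symmetric])
    thus "trivial_effect A" unfolding trivial_effect_def using m0 mM M1 by auto
  qed
  have eq1: "W_sigma A - D_sigma A = 1 \<longleftrightarrow> nontrivial_projection A"
  proof
    assume h: "W_sigma A - D_sigma A = 1"
    have m00: "m = 0" and M11: "M = 1" and GH1: "G + H = 1" using h WD GH m0 M1 mM by linarith+
    have "N \<le> 1 - G" unfolding N_def cA
    proof (rule key_onorm[OF blcA scA pcA])
      show "0 \<le> 1 - G" using GF FF4 by simp
      fix x :: 'a
      have "H = 1 - G" using GH1 by simp
      hence "H * (norm x)^2 = (norm x)^2 - G * (norm x)^2" by (simp add: left_diff_distrib)
      hence "G * (norm x)^2 \<le> rr (A x) x - (norm (A x))^2" using EH[of x] by linarith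
      moreover have "(1 - G) * (norm x)^2 = (norm x)^2 - G * (norm x)^2" by (simp add: left_diff_distrib)
      moreover have "0 \<le> (norm (A x))^2" by simp
      ultimately show "rr (x - A x) x \<le> (1 - G) * (norm x)^2" using rcA[of x] by linarith
    qed
    hence G00: "G = 0" using m00 m_def G0 by simp
    have AA: "\<And>x. A (A x) = A x"
    proof -
      fix x
      have "rr (A x - A (A x)) x = 0" using EG[of x] G00 pK rK posop_def
        by (metis (no_types, lifting) mult_zero_left order_antisym)
      hence "A x - A (A x) = 0" by (rule zero_form[OF blK sK pK])
      thus "A (A x) = A x" by simp
    qed
    have proj: "is_projection A" using assms(2) AA
      by (simp add: is_projection_def is_effect_def fun_eq_iff)
    have "A \<noteq> (\<lambda>x. 0)"
    proof
      assume "A = (\<lambda>x. 0)"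
      hence "M = 0" by (simp add: M_def onorm_zero)
      thus False using M11 by simp
    qed
    moreover have "A \<noteq> id"
    proof
      assume "A = id"
      hence "compl_op A = (\<lambda>x. 0)" by (simp add: compl_op_def fun_eq_iff)
      hence "N = 0" by (simp add: N_def onorm_zero)
      thus False using m00 m_def by simp
    qed
    ultimately show "nontrivial_projection A" using proj by (simp add: nontrivial_projection_def)
  next
    assume np: "nontrivial_projection A"
    have AA: "\<And>x. A (A x) = A x" using np
      by (simp add: nontrivial_projection_def is_projection_def fun_eq_iff)
    have "G \<le> 0" unfolding G_def Kx by (rule key_onorm[OF blK sK pK]) (simp_all add: AA)
    hence G00: "G = 0" using G0 by simp
    have "H \<le> 1" unfolding H_def cK by (rule key_onorm[OF blcK scK pcK]) (simp_all add: AA rr_self)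
    hence H1: "H = 1" using GH G00 by simp
    obtain y where y: "A y \<noteq> 0" using np by (auto simp: nontrivial_projection_def fun_eq_iff)
    have "(norm (A y))^2 \<le> M * (norm (A y))^2" using E1[of "A y"] AA by (simp add: rr_self)
    hence "1 \<le> M" using y by simp
    hence M11: "M = 1" using M1 by simp
    obtain z where z: "A z \<noteq> z" using np by (auto simp: nontrivial_projection_def fun_eq_iff)
    have Az: "A (z - A z) = 0" using AA by (simp add: A.diff)
    have "(norm (z - A z))^2 \<le> N * (norm (z - A z))^2" using E2[of "z - A z"] Az by simp
    hence "1 \<le> N" using z by simp
    hence "m = 0" using N1 m_def by simp
    thus "W_sigma A - D_sigma A = 1" using WD M11 G00 H1 by simp
  qed
  show ?thesis using partA eq0 triv eq1 by simp
qed

end
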